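(* Let $\ast$ be any of the four standard graph products (Cartesian $\square$, direct $\times$, lexicographic $\circ$, strong $\boxtimes$). No minimum counterexample to the conjecture "for every graph $G$, $\chi(G)\le \mathrm{toi}(G)$" is of the form $G \ast H$.
   Context: All graphs are finite, simple and loopless. $\chi(G)$ is the chromatic number. A graph $G$ contains $H$ as a strong immersion if there is an injective map $\varphi\colon V(H)\to V(G)$ and, for each edge $uv\in E(H)$, a path in $G$ joining $\varphi(u),\varphi(v)$, such that these paths are pairwise edge-disjoint and no terminal is an interior vertex of any such path; it is totally odd if all paths have odd length. $\mathrm{toi}(G)$ is the maximum $t$ such that $G$ contains a totally odd strong immersion of $K_t$. Products: Cartesian $G\square H$ on $V(G)\times V(H)$ with $(g_1,h_1)\sim(g_2,h_2)$ iff ($g_1=g_2$, $h_1h_2\in E(H)$) or ($h_1=h_2$, $g_1g_2\in E(G)$); direct $G\times H$ with adjacency iff $g_1g_2\in E(G)$ and $h_1h_2\in E(H)$; strong $G\boxtimes H=(G\square H)\cup(G\times H)$; lexicographic $G\circ H$ with adjacency iff $g_1g_2\in E(G)$, or $g_1=g_2$ and $h_1h_2\in E(H)$. *)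

theory Defs
  imports Main
begin

type_synonym 'a graph = "'a set \<times> ('a \<Rightarrow> 'a \<Rightarrow> bool)"

definition verts :: "'a graph \<Rightarrow> 'a set" where "verts G = fst G"
definition adj :: "'a graph \<Rightarrow> 'a \<Rightarrow> 'a \<Rightarrow> bool" where "adj G = snd G"

definition simple_graph :: "'a graph \<Rightarrow> bool" where
  "simple_graph G \<longleftrightarrow> finite (verts G)
     \<and> (\<forall>u v. adj G u v \<longrightarrow> u \<in> verts G \<and> v \<in> verts G)
     \<and> (\<forall>u v. adj G u v \<longrightarrow> adj G v u)
     \<and> (\<forall>u. \<not> adj G u u)"

definition chi :: "'a graph \<Rightarrow> nat" where
  "chi G = (LEAST k. \<exists>c :: 'a \<Rightarrow> nat. (\<forall>v\<in>verts G. c v < k)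
              \<and> (\<forall>u v. adj G u v \<longrightarrow> c u \<noteq> c v))"

definition is_path :: "'a graph \<Rightarrow> 'a list \<Rightarrow> bool" where
  "is_path G ps \<longleftrightarrow> length ps \<ge> 2 \<and> distinct ps \<and> set ps \<subseteq> verts G
     \<and> (\<forall>k. Suc k < length ps \<longrightarrow> adj G (ps ! k) (ps ! Suc k))"

definition path_edges :: "'a list \<Rightarrow> 'a set set" where
  "path_edges ps = {{ps ! k, ps ! Suc k} | k. Suc k < length ps}"

definition path_interior :: "'a list \<Rightarrow> 'a set" where
  "path_interior ps = set (butlast (tl ps))"

text \<open>G contains a totally odd strong immersion of K_t: terminals phi 0..phi(t-1),
  and for each edge {i,j} (i<j) of K_t a path P i j from phi i to phi j of odd length.\<close>
definition has_toi_Kt :: "'a graph \<Rightarrow> nat \<Rightarrow> bool" where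
  "has_toi_Kt G t \<longleftrightarrow> (\<exists>(phi :: nat \<Rightarrow> 'a) (P :: nat \<Rightarrow> nat \<Rightarrow> 'a list).
      inj_on phi {0..<t} \<and> phi ` {0..<t} \<subseteq> verts G
    \<and> (\<forall>i j. i < j \<and> j < t \<longrightarrow>
          is_path G (P i j) \<and> hd (P i j) = phi i \<and> last (P i j) = phi j
          \<and> odd (length (P i j) - 1)
          \<and> (\<forall>k<t. phi k \<notin> path_interior (P i j)))
    \<and> (\<forall>i j k l. i < j \<and> j < t \<and> k < l \<and> l < t \<and> (i, j) \<noteq> (k, l) \<longrightarrow>
          path_edges (P i j) \<inter> path_edges (P k l) = {}))"

definition toi :: "'a graph \<Rightarrow> nat" where
  "toi G = Max {t. has_toi_Kt G t}"

datatype prodkind = Cartesian | Direct | Strong | Lexicographic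

definition cart_adj :: "'a graph \<Rightarrow> 'b graph \<Rightarrow> 'a \<times> 'b \<Rightarrow> 'a \<times> 'b \<Rightarrow> bool" where
  "cart_adj G H x y \<longleftrightarrow>
     (fst x = fst y \<and> fst x \<in> verts G \<and> adj H (snd x) (snd y))
   \<or> (snd x = snd y \<and> snd x \<in> verts H \<and> adj G (fst x) (fst y))"

definition direct_adj :: "'a graph \<Rightarrow> 'b graph \<Rightarrow> 'a \<times> 'b \<Rightarrow> 'a \<times> 'b \<Rightarrow> bool" where
  "direct_adj G H x y \<longleftrightarrow> adj G (fst x) (fst y) \<and> adj H (snd x) (snd y)"

definition lex_adj :: "'a graph \<Rightarrow> 'b graph \<Rightarrow> 'a \<times> 'b \<Rightarrow> 'a \<times> 'b \<Rightarrow> bool" where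
  "lex_adj G H x y \<longleftrightarrow>
     (adj G (fst x) (fst y) \<and> snd x \<in> verts H \<and> snd y \<in> verts H)
   \<or> (fst x = fst y \<and> fst x \<in> verts G \<and> adj H (snd x) (snd y))"

fun gprod :: "prodkind \<Rightarrow> 'a graph \<Rightarrow> 'b graph \<Rightarrow> ('a \<times> 'b) graph" where
  "gprod Cartesian G H = (verts G \<times> verts H, cart_adj G H)"
| "gprod Direct G H = (verts G \<times> verts H, direct_adj G H)"
| "gprod Strong G H = (verts G \<times> verts H, \<lambda>x y. cart_adj G H x y \<or> direct_adj G H x y)"
| "gprod Lexicographic G H = (verts G \<times> verts H, lex_adj G H)"

text \<open>Minimum counterexample (fewest vertices) to chi G \<le> toi G. Every finite graph is
  isomorphic to one on natural-number vertices, so smaller graphs range over nat graphs.\<close>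
definition min_counterexample :: "'a graph \<Rightarrow> bool" where
  "min_counterexample X \<longleftrightarrow> simple_graph X \<and> toi X < chi X
     \<and> (\<forall>G' :: nat graph. simple_graph G' \<and> card (verts G') < card (verts X)
            \<longrightarrow> chi G' \<le> toi G')"

end

theory Submission
  imports Defs
begin


lemma path_edges_subset: "e \<in> path_edges ps \<Longrightarrow> e \<subseteq> set ps"
  unfolding path_edges_def by auto

lemma path_interior_conv:
  "z \<in> path_interior ps \<longleftrightarrow> (\<exists>k. 0 < k \<and> Suc k < length ps \<and> z = ps ! k)"
proof -
  have "z \<in> set (butlast (tl ps)) \<longleftrightarrow> (\<exists>k. 0 < k \<and> Suc k < length ps \<and> z = ps ! k)"
  proof
    assume "z \<in> set (butlast (tl ps))"
    then obtain m where m: "m < length (butlast (tl ps))" "z = butlast (tl ps) ! m"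
      by (auto simp: in_set_conv_nth)
    then show "\<exists>k. 0 < k \<and> Suc k < length ps \<and> z = ps ! k"
      by (intro exI[of _ "Suc m"]) (auto simp: nth_butlast nth_tl)
  next
    assume "\<exists>k. 0 < k \<and> Suc k < length ps \<and> z = ps ! k"
    then obtain k where k: "0 < k" "Suc k < length ps" "z = ps ! k" by blast
    then obtain m where "k = Suc m" by (cases k) auto
    with k show "z \<in> set (butlast (tl ps))"
      unfolding in_set_conv_nth
      by (intro exI[of _ m]) (auto simp: nth_butlast nth_tl)
  qed
  then show ?thesis unfolding path_interior_def .
qed

lemma path_edges_map: "path_edges (map f ps) = (\<lambda>e. f ` e) ` path_edges ps"
proof
  show "path_edges (map f ps) \<subseteq> (\<lambda>e. f ` e) ` path_edges ps"
  proof
    fix e assume "e \<in> path_edges (map f ps)"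
    then obtain k where k: "Suc k < length ps" "e = {f (ps ! k), f (ps ! Suc k)}"
      unfolding path_edges_def by auto
    then have "e = f ` {ps ! k, ps ! Suc k}" by simp
    moreover have "{ps ! k, ps ! Suc k} \<in> path_edges ps" using k unfolding path_edges_def by blast
    ultimately show "e \<in> (\<lambda>e. f ` e) ` path_edges ps" by blast
  qed
  show "(\<lambda>e. f ` e) ` path_edges ps \<subseteq> path_edges (map f ps)"
  proof
    fix e assume "e \<in> (\<lambda>e. f ` e) ` path_edges ps"
    then obtain k where k: "Suc k < length ps" "e = f ` {ps ! k, ps ! Suc k}"
      unfolding path_edges_def by auto
    then have "e = {map f ps ! k, map f ps ! Suc k}" "Suc k < length (map f ps)" by auto
    then show "e \<in> path_edges (map f ps)" unfolding path_edges_def by blast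
  qed
qed

lemma path_interior_map: "path_interior (map f ps) = f ` path_interior ps"
  unfolding path_interior_def by (simp add: map_butlast[symmetric] map_tl[symmetric])

lemma is_path_map:
  assumes "is_path Y ps" "inj_on f (set ps)" "f ` set ps \<subseteq> verts X"
    "\<And>u v. u \<in> set ps \<Longrightarrow> v \<in> set ps \<Longrightarrow> adj Y u v \<Longrightarrow> adj X (f u) (f v)"
  shows "is_path X (map f ps)"
  using assms unfolding is_path_def
  by (auto simp: distinct_map)

lemma has_toi_0: "has_toi_Kt X 0"
  unfolding has_toi_Kt_def by (intro exI[of _ "\<lambda>_. undefined"] exI[of _ "\<lambda>_ _. []"]) simp

lemma has_toiE:
  assumes "has_toi_Kt X t"
  obtains phi P where "inj_on phi {0..<t}" "phi ` {0..<t} \<subseteq> verts X"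
    "\<And>i j. i < j \<Longrightarrow> j < t \<Longrightarrow> is_path X (P i j)"
    "\<And>i j. i < j \<Longrightarrow> j < t \<Longrightarrow> hd (P i j) = phi i"
    "\<And>i j. i < j \<Longrightarrow> j < t \<Longrightarrow> last (P i j) = phi j"
    "\<And>i j. i < j \<Longrightarrow> j < t \<Longrightarrow> odd (length (P i j) - 1)"
    "\<And>i j k. i < j \<Longrightarrow> j < t \<Longrightarrow> k < t \<Longrightarrow> phi k \<notin> path_interior (P i j)"
    "\<And>i j k l. i < j \<Longrightarrow> j < t \<Longrightarrow> k < l \<Longrightarrow> l < t \<Longrightarrow> (i, j) \<noteq> (k, l) \<Longrightarrow>
          path_edges (P i j) \<inter> path_edges (P k l) = {}"
proof -
  from assms obtain phi P where A: "inj_on phi {0..<t}" and B: "phi ` {0..<t} \<subseteq> verts X"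
    and C: "\<forall>i j. i < j \<and> j < t \<longrightarrow>
          is_path X (P i j) \<and> hd (P i j) = phi i \<and> last (P i j) = phi j
          \<and> odd (length (P i j) - 1)
          \<and> (\<forall>k<t. phi k \<notin> path_interior (P i j))"
    and D: "\<forall>i j k l. i < j \<and> j < t \<and> k < l \<and> l < t \<and> (i, j) \<noteq> (k, l) \<longrightarrow>
          path_edges (P i j) \<inter> path_edges (P k l) = {}"
    unfolding has_toi_Kt_def by (elim exE conjE)
  show thesis
  proof (rule that[OF A B])
    fix i j assume ij: "i < j" "j < t"
    with C have c: "is_path X (P i j) \<and> hd (P i j) = phi i \<and> last (P i j) = phi j
          \<and> odd (length (P i j) - 1) \<and> (\<forall>k<t. phi k \<notin> path_interior (P i j))" by simp
    then show "is_path X (P i j)" "hd (P i j) = phi i" "last (P i j) = phi j"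
      "odd (length (P i j) - 1)" by simp_all
    show "\<And>k. k < t \<Longrightarrow> phi k \<notin> path_interior (P i j)" using c by simp
  next
    fix i j k l assume "i < j" "j < t" "k < l" "l < t" "(i, j) \<noteq> (k, l)"
    then show "path_edges (P i j) \<inter> path_edges (P k l) = {}" using D by simp
  qed
qed

lemma has_toiI:
  assumes "inj_on phi {0..<t}" "phi ` {0..<t} \<subseteq> verts X"
    "\<And>i j. i < j \<Longrightarrow> j < t \<Longrightarrow> is_path X (P i j)"
    "\<And>i j. i < j \<Longrightarrow> j < t \<Longrightarrow> hd (P i j) = phi i"
    "\<And>i j. i < j \<Longrightarrow> j < t \<Longrightarrow> last (P i j) = phi j"
    "\<And>i j. i < j \<Longrightarrow> j < t \<Longrightarrow> odd (length (P i j) - 1)"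
    "\<And>i j k. i < j \<Longrightarrow> j < t \<Longrightarrow> k < t \<Longrightarrow> phi k \<notin> path_interior (P i j)"
    "\<And>i j k l. i < j \<Longrightarrow> j < t \<Longrightarrow> k < l \<Longrightarrow> l < t \<Longrightarrow> (i, j) \<noteq> (k, l) \<Longrightarrow>
          path_edges (P i j) \<inter> path_edges (P k l) = {}"
  shows "has_toi_Kt X t"
  unfolding has_toi_Kt_def
  apply (rule exI[of _ phi], rule exI[of _ P])
  apply (intro conjI allI impI)
  using assms by simp_all

lemma has_toi_le_card:
  assumes "finite (verts X)" "has_toi_Kt X t" shows "t \<le> card (verts X)"
proof -
  from assms(2) obtain phi P where "inj_on phi {0..<t}" "phi ` {0..<t} \<subseteq> verts X"
    "\<And>i j. i < j \<Longrightarrow> j < t \<Longrightarrow> is_path X (P i j)"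
    "\<And>i j. i < j \<Longrightarrow> j < t \<Longrightarrow> hd (P i j) = phi i"
    "\<And>i j. i < j \<Longrightarrow> j < t \<Longrightarrow> last (P i j) = phi j"
    "\<And>i j. i < j \<Longrightarrow> j < t \<Longrightarrow> odd (length (P i j) - 1)"
    "\<And>i j k. i < j \<Longrightarrow> j < t \<Longrightarrow> k < t \<Longrightarrow> phi k \<notin> path_interior (P i j)"
    "\<And>i j k l. i < j \<Longrightarrow> j < t \<Longrightarrow> k < l \<Longrightarrow> l < t \<Longrightarrow> (i, j) \<noteq> (k, l) \<Longrightarrow>
          path_edges (P i j) \<inter> path_edges (P k l) = {}"
    by (erule has_toiE)
  then have "card (phi ` {0..<t}) \<le> card (verts X)" by (intro card_mono[OF assms(1)])
  with \<open>inj_on phi {0..<t}\<close> show ?thesis by (simp add: card_image)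
qed

lemma toi_fin:
  assumes "finite (verts X)" shows "finite {t. has_toi_Kt X t}"
proof (rule finite_subset[of _ "{..card (verts X)}"])
  show "{t. has_toi_Kt X t} \<subseteq> {..card (verts X)}"
    using has_toi_le_card[OF assms] by blast
qed simp

lemma toi_ge: "finite (verts X) \<Longrightarrow> has_toi_Kt X t \<Longrightarrow> t \<le> toi X"
  unfolding toi_def by (rule Max_ge[OF toi_fin]) auto

lemma toi_has: assumes "finite (verts X)" shows "has_toi_Kt X (toi X)"
proof -
  have "{t. has_toi_Kt X t} \<noteq> {}" using has_toi_0[of X] by blast
  from Max_in[OF toi_fin[OF assms] this] show ?thesis unfolding toi_def by simp
qed

lemma has_toi_mono: assumes "has_toi_Kt X t" "s \<le> t" shows "has_toi_Kt X s"
proof -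
  from assms(1) obtain phi P where h:
    "inj_on phi {0..<t}" "phi ` {0..<t} \<subseteq> verts X"
    "\<And>i j. i < j \<Longrightarrow> j < t \<Longrightarrow> is_path X (P i j)"
    "\<And>i j. i < j \<Longrightarrow> j < t \<Longrightarrow> hd (P i j) = phi i"
    "\<And>i j. i < j \<Longrightarrow> j < t \<Longrightarrow> last (P i j) = phi j"
    "\<And>i j. i < j \<Longrightarrow> j < t \<Longrightarrow> odd (length (P i j) - 1)"
    "\<And>i j k. i < j \<Longrightarrow> j < t \<Longrightarrow> k < t \<Longrightarrow> phi k \<notin> path_interior (P i j)"
    "\<And>i j k l. i < j \<Longrightarrow> j < t \<Longrightarrow> k < l \<Longrightarrow> l < t \<Longrightarrow> (i, j) \<noteq> (k, l) \<Longrightarrow>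
          path_edges (P i j) \<inter> path_edges (P k l) = {}"
    by (erule has_toiE)
  show ?thesis
  proof (rule has_toiI[of phi s X P])
    show "inj_on phi {0..<s}" using h(1) by (rule inj_on_subset) (use assms(2) in auto)
    show "phi ` {0..<s} \<subseteq> verts X" using h(2) assms(2) by auto
  next
    fix i j assume "i < j" "j < s" then have "j < t" using assms(2) by simp
    with \<open>i < j\<close> show "is_path X (P i j)" "hd (P i j) = phi i" "last (P i j) = phi j"
      "odd (length (P i j) - 1)" using h(3-6) by blast+
  next
    fix i j k assume "i < j" "j < s" "k < s" then have "j < t" "k < t" using assms(2) by simp_all
    with \<open>i < j\<close> show "phi k \<notin> path_interior (P i j)" using h(7) by blast
  next
    fix i j k l assume "i < j" "j < s" "k < l" "l < s" "(i, j) \<noteq> (k, l)"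
    then have "j < t" "l < t" using assms(2) by simp_all
    with \<open>i < j\<close> \<open>k < l\<close> \<open>(i, j) \<noteq> (k, l)\<close>
    show "path_edges (P i j) \<inter> path_edges (P k l) = {}" using h(8) by blast
  qed
qed

lemma chi_le:
  assumes "\<forall>v\<in>verts X. c v < k" "\<forall>u v. adj X u v \<longrightarrow> c u \<noteq> c v"
  shows "chi X \<le> k"
  unfolding chi_def by (rule Least_le) (use assms in blast)

lemma chi_col:
  assumes "simple_graph X"
  shows "\<exists>c::'a \<Rightarrow> nat. (\<forall>v\<in>verts X. c v < chi X) \<and> (\<forall>u v. adj X u v \<longrightarrow> c u \<noteq> c v)"
proof -
  have fin: "finite (verts X)" using assms unfolding simple_graph_def by auto
  obtain f :: "'a \<Rightarrow> nat" and n where f: "f ` verts X = {i. i < n}" "inj_on f (verts X)"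
    using finite_imp_inj_to_nat_seg[OF fin] by blast
  have "(\<forall>v\<in>verts X. f v < n) \<and> (\<forall>u v. adj X u v \<longrightarrow> f u \<noteq> f v)"
  proof (intro conjI allI impI ballI)
    fix v assume "v \<in> verts X" then show "f v < n" using f by auto
  next
    fix u v assume "adj X u v"
    then have "u \<in> verts X" "v \<in> verts X" "u \<noteq> v" using assms unfolding simple_graph_def by metis+
    then show "f u \<noteq> f v" using f(2) by (meson inj_onD)
  qed
  then have ex: "\<exists>k. \<exists>c :: 'a \<Rightarrow> nat. (\<forall>v\<in>verts X. c v < k)
              \<and> (\<forall>u v. adj X u v \<longrightarrow> c u \<noteq> c v)" by blast
  show ?thesis unfolding chi_def by (rule LeastI_ex[OF ex])
qed



lemma sgD:
  assumes "simple_graph Y" "adj Y u v"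
  shows "u \<in> verts Y" "v \<in> verts Y" "adj Y v u" "u \<noteq> v"
proof -
  have A: "\<forall>u v. adj Y u v \<longrightarrow> u \<in> verts Y \<and> v \<in> verts Y" "\<forall>u v. adj Y u v \<longrightarrow> adj Y v u"
    "\<forall>u. \<not> adj Y u u" using assms(1) by (simp_all add: simple_graph_def)
  show "u \<in> verts Y" "v \<in> verts Y" "adj Y v u" using A(1,2) assms(2) by blast+
  show "u \<noteq> v" using A(3) assms(2) by blast
qed

lemma sg_fin: "simple_graph Y \<Longrightarrow> finite (verts Y)"
  by (simp add: simple_graph_def)

lemma interior_sub: "path_interior ps \<subseteq> set ps"
proof
  fix x assume "x \<in> path_interior ps"
  then have "x \<in> set (tl ps)" unfolding path_interior_def by (rule in_set_butlastD)
  then show "x \<in> set ps" by (cases ps) auto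
qed

lemma hom_toi:
  assumes Y: "simple_graph Y" and inj: "inj_on f (verts Y)" and im: "f ` verts Y \<subseteq> verts X"
    and hom: "\<And>u v. adj Y u v \<Longrightarrow> adj X (f u) (f v)"
    and h: "has_toi_Kt Y t"
  shows "has_toi_Kt X t"
proof -
  from h obtain phi P where h1: "inj_on phi {0..<t}" "phi ` {0..<t} \<subseteq> verts Y"
    "\<And>i j. i < j \<Longrightarrow> j < t \<Longrightarrow> is_path Y (P i j)"
    "\<And>i j. i < j \<Longrightarrow> j < t \<Longrightarrow> hd (P i j) = phi i"
    "\<And>i j. i < j \<Longrightarrow> j < t \<Longrightarrow> last (P i j) = phi j"
    "\<And>i j. i < j \<Longrightarrow> j < t \<Longrightarrow> odd (length (P i j) - 1)"
    "\<And>i j k. i < j \<Longrightarrow> j < t \<Longrightarrow> k < t \<Longrightarrow> phi k \<notin> path_interior (P i j)"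
    "\<And>i j k l. i < j \<Longrightarrow> j < t \<Longrightarrow> k < l \<Longrightarrow> l < t \<Longrightarrow> (i, j) \<noteq> (k, l) \<Longrightarrow>
          path_edges (P i j) \<inter> path_edges (P k l) = {}"
    by (erule has_toiE)
  have setP: "set (P i j) \<subseteq> verts Y" if "i < j" "j < t" for i j
    using h1(3)[OF that] unfolding is_path_def by blast
  have neP: "P i j \<noteq> []" if "i < j" "j < t" for i j
    using h1(3)[OF that] unfolding is_path_def by auto
  show ?thesis
  proof (rule has_toiI[of "f \<circ> phi" t X "\<lambda>i j. map f (P i j)"])
    show "inj_on (f \<circ> phi) {0..<t}"
    proof (rule comp_inj_on[OF h1(1)])
      show "inj_on f (phi ` {0..<t})" using inj h1(2) by (rule inj_on_subset)
    qed
    show "(f \<circ> phi) ` {0..<t} \<subseteq> verts X" using h1(2) im by auto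
  next
    fix i j assume ij: "i < j" "j < t"
    show "is_path X (map f (P i j))"
    proof (rule is_path_map[OF h1(3)[OF ij]])
      show "inj_on f (set (P i j))" using inj setP[OF ij] by (rule inj_on_subset)
      show "f ` set (P i j) \<subseteq> verts X" using im setP[OF ij] by auto
    qed (rule hom)
    show "hd (map f (P i j)) = (f \<circ> phi) i" using neP[OF ij] h1(4)[OF ij] by (simp add: hd_map)
    show "last (map f (P i j)) = (f \<circ> phi) j" using neP[OF ij] h1(5)[OF ij] by (simp add: last_map)
    show "odd (length (map f (P i j)) - 1)" using h1(6)[OF ij] by simp
  next
    fix i j k assume ijk: "i < j" "j < t" "k < t"
    have intsub: "path_interior (P i j) \<subseteq> verts Y"
      using interior_sub setP[OF ijk(1,2)] by (rule subset_trans)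
    have "phi k \<in> verts Y" using h1(2) ijk(3) by (simp add: image_subset_iff)
    show "(f \<circ> phi) k \<notin> path_interior (map f (P i j))"
    proof
      assume "(f \<circ> phi) k \<in> path_interior (map f (P i j))"
      then obtain x where x: "x \<in> path_interior (P i j)" "f (phi k) = f x"
        unfolding path_interior_map comp_def by blast
      have "x \<in> verts Y" using x(1) intsub by blast
      then have "phi k = x" using inj_onD[OF inj x(2)] \<open>phi k \<in> verts Y\<close> by blast
      with x(1) h1(7)[OF ijk] show False by simp
    qed
  next
    fix i j k l assume ijkl: "i < j" "j < t" "k < l" "l < t" "(i, j) \<noteq> (k, l)"
    have d: "path_edges (P i j) \<inter> path_edges (P k l) = {}" by (rule h1(8)[OF ijkl])
    show "path_edges (map f (P i j)) \<inter> path_edges (map f (P k l)) = {}"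
    proof (rule ccontr)
      assume "path_edges (map f (P i j)) \<inter> path_edges (map f (P k l)) \<noteq> {}"
      then obtain e where "e \<in> (\<lambda>e. f ` e) ` path_edges (P i j)" "e \<in> (\<lambda>e. f ` e) ` path_edges (P k l)"
        unfolding path_edges_map by blast
      then obtain e1 e2 where e: "e1 \<in> path_edges (P i j)" "e2 \<in> path_edges (P k l)" "f ` e1 = f ` e2"
        by (auto elim!: imageE)
      have s1: "e1 \<subseteq> verts Y" using path_edges_subset[OF e(1)] setP[OF ijkl(1,2)] by blast
      have s2: "e2 \<subseteq> verts Y" using path_edges_subset[OF e(2)] setP[OF ijkl(3,4)] by blast
      have "e1 = e2" using inj_on_image_eq_iff[OF inj s1 s2] e(3) by simp
      with e d show False by blast
    qed
  qed
qed

lemma toi_hom: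
  assumes "simple_graph Y" "finite (verts X)" "inj_on f (verts Y)" "f ` verts Y \<subseteq> verts X"
    "\<And>u v. adj Y u v \<Longrightarrow> adj X (f u) (f v)"
  shows "toi Y \<le> toi X"
proof -
  have "finite (verts Y)" using assms(1) by (rule sg_fin)
  then have "has_toi_Kt Y (toi Y)" by (rule toi_has)
  with assms(5) have "has_toi_Kt X (toi Y)" by (rule hom_toi[OF assms(1,3,4)])
  then show ?thesis using toi_ge[OF assms(2)] by blast
qed

lemma chi_hom:
  assumes "simple_graph X" "f ` verts Y \<subseteq> verts X" "\<And>u v. adj Y u v \<Longrightarrow> adj X (f u) (f v)"
    "\<And>u v. adj Y u v \<Longrightarrow> u \<in> verts Y"
  shows "chi Y \<le> chi X"
proof -
  obtain c where c: "\<forall>v\<in>verts X. c v < chi X" "\<forall>u v. adj X u v \<longrightarrow> c u \<noteq> c v"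
    using chi_col[OF assms(1)] by blast
  show ?thesis
  proof (rule chi_le[of Y "c \<circ> f" "chi X"])
    show "\<forall>v\<in>verts Y. (c \<circ> f) v < chi X" using c(1) assms(2) by auto
    show "\<forall>u v. adj Y u v \<longrightarrow> (c \<circ> f) u \<noteq> (c \<circ> f) v" using c(2) assms(3) by auto
  qed
qed

lemma transfer:
  fixes X :: "'b graph" and Y :: "'a graph"
  assumes mc: "min_counterexample X" and Y: "simple_graph Y" and card: "card (verts Y) < card (verts X)"
  shows "chi Y \<le> toi Y"
proof -
  have fin: "finite (verts Y)" using Y by (rule sg_fin)
  obtain f :: "'a \<Rightarrow> nat" and n where f: "f ` verts Y = {i. i < n}" "inj_on f (verts Y)"
    using finite_imp_inj_to_nat_seg[OF fin] by blast
  define g where "g = inv_into (verts Y) f"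
  define Y' :: "nat graph" where "Y' = (f ` verts Y, \<lambda>a b. a \<in> f ` verts Y \<and> b \<in> f ` verts Y \<and> adj Y (g a) (g b))"
  have vY': "verts Y' = f ` verts Y" unfolding Y'_def verts_def by simp
  have aY': "adj Y' a b \<longleftrightarrow> a \<in> f ` verts Y \<and> b \<in> f ` verts Y \<and> adj Y (g a) (g b)" for a b
    unfolding Y'_def adj_def by simp
  have gf: "g (f v) = v" if "v \<in> verts Y" for v unfolding g_def using f(2) that by simp
  have Ysimp: "u \<in> verts Y" "v \<in> verts Y" "adj Y v u" "u \<noteq> v" if "adj Y u v" for u v
    using sgD[OF Y that] by blast+
  have sY': "simple_graph Y'"
  proof -
    have "finite (verts Y')" using fin vY' by simp
    moreover have "\<forall>u v. adj Y' u v \<longrightarrow> u \<in> verts Y' \<and> v \<in> verts Y'" unfolding aY' vY' by blast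
    moreover have "\<forall>u v. adj Y' u v \<longrightarrow> adj Y' v u" unfolding aY' using Ysimp(3) by blast
    moreover have "\<forall>u. \<not> adj Y' u u" unfolding aY' using Ysimp(4) by blast
    ultimately show ?thesis unfolding simple_graph_def by blast
  qed
  have cardY': "card (verts Y') < card (verts X)" using card f(2) vY' by (simp add: card_image)
  have "chi Y' \<le> toi Y'" using mc sY' cardY' unfolding min_counterexample_def by blast
  moreover have "chi Y \<le> chi Y'"
  proof (rule chi_hom[OF sY', of f])
    show "f ` verts Y \<subseteq> verts Y'" using vY' by simp
    show "adj Y' (f u) (f v)" if "adj Y u v" for u v
      unfolding aY' using Ysimp(1,2)[OF that] that gf by simp
    show "u \<in> verts Y" if "adj Y u v" for u v using Ysimp[OF that] by blast
  qed
  moreover have "toi Y' \<le> toi Y"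
  proof (rule toi_hom[OF sY' fin, of g])
    show "inj_on g (verts Y')" unfolding vY' g_def using f(2) by (simp add: inj_on_inv_into)
    show "g ` verts Y' \<subseteq> verts Y" unfolding vY' g_def by (auto intro: inv_into_into)
    show "adj Y (g u) (g v)" if "adj Y' u v" for u v using that aY' by blast
  qed
  ultimately show ?thesis by linarith
qed



definition padi :: "nat \<Rightarrow> nat \<Rightarrow> nat" where
  "padi L k = (if k \<le> L then k else if even (k - L) then L else L - 1)"

lemma padi_le: "padi L k \<le> L"
  unfolding padi_def by auto

lemma padi_id: "k \<le> L \<Longrightarrow> padi L k = k"
  unfolding padi_def by auto

lemma padi_par: assumes "1 \<le> L" shows "even (padi L k + k)"
proof (cases "k \<le> L")
  case True then show ?thesis by (simp add: padi_def)
next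
  case False
  show ?thesis
  proof (cases "even (k - L)")
    case True
    then have "padi L k = L" using False by (simp add: padi_def)
    with True False show ?thesis by presburger
  next
    case c: False
    then have "padi L k = L - 1" using False by (simp add: padi_def)
    with c False assms show ?thesis by presburger
  qed
qed

lemma padi_step:
  assumes "1 \<le> L"
  shows "(padi L (Suc k) = Suc (padi L k) \<and> Suc (padi L k) \<le> L)
       \<or> (padi L k = Suc (padi L (Suc k)) \<and> padi L k \<le> L)"
proof (cases "Suc k \<le> L")
  case True then show ?thesis by (simp add: padi_def)
next
  case F: False
  show ?thesis
  proof (cases "k = L")
    case True
    then have "padi L k = L" "padi L (Suc k) = L - 1" by (simp_all add: padi_def)
    then show ?thesis using assms by simp
  next
    case False
    then have kL: "k > L" using F by simp
    show ?thesis
    proof (cases "even (k - L)")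
      case True
      then have "padi L k = L" "padi L (Suc k) = L - 1" using kL by (simp_all add: padi_def Suc_diff_le)
      then show ?thesis using assms by simp
    next
      case False
      then have "padi L k = L - 1" "padi L (Suc k) = L" using kL by (simp_all add: padi_def Suc_diff_le)
      then show ?thesis using assms by simp
    qed
  qed
qed

lemma padi_end: "odd L \<Longrightarrow> odd N \<Longrightarrow> L \<le> N \<Longrightarrow> padi L N = L"
  unfolding padi_def by auto

definition zipp :: "'a list \<Rightarrow> 'b list \<Rightarrow> ('a \<times> 'b) list" where
  "zipp P Q = map (\<lambda>k. (P ! padi (length P - 1) k, Q ! padi (length Q - 1) k))
     [0..<Suc (max (length P - 1) (length Q - 1))]"

lemma zipp_length: "length (zipp P Q) = Suc (max (length P - 1) (length Q - 1))"
  unfolding zipp_def by simp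

lemma zipp_nth: "k < Suc (max (length P - 1) (length Q - 1)) \<Longrightarrow>
   zipp P Q ! k = (P ! padi (length P - 1) k, Q ! padi (length Q - 1) k)"
  unfolding zipp_def by (simp del: upt_Suc)

lemma path_edgeI: "Suc m < length ps \<Longrightarrow> {ps ! m, ps ! Suc m} \<in> path_edges ps"
  unfolding path_edges_def by blast

lemma path_edgeE: "e \<in> path_edges ps \<Longrightarrow> (\<And>m. Suc m < length ps \<Longrightarrow> e = {ps ! m, ps ! Suc m} \<Longrightarrow> R) \<Longrightarrow> R"
  unfolding path_edges_def by blast

lemma zipp_props:
  fixes P :: "'a list" and Q :: "'b list" and X :: "('a \<times> 'b) graph"
  assumes G: "simple_graph G" and H: "simple_graph H"
    and P: "is_path G P" and Q: "is_path H Q"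
    and oP: "odd (length P - 1)" and oQ: "odd (length Q - 1)"
    and V: "verts G \<times> verts H \<subseteq> verts X"
    and A: "\<And>p p' q q'. adj G p p' \<Longrightarrow> adj H q q' \<Longrightarrow> adj X (p, q) (p', q')"
  shows "is_path X (zipp P Q)"
    and "hd (zipp P Q) = (hd P, hd Q)"
    and "last (zipp P Q) = (last P, last Q)"
    and "odd (length (zipp P Q) - 1)"
    and "\<And>e. e \<in> path_edges (zipp P Q) \<Longrightarrow> fst ` e \<in> path_edges P \<and> snd ` e \<in> path_edges Q"
    and "\<And>z. z \<in> path_interior (zipp P Q) \<Longrightarrow> fst z \<in> path_interior P \<or> snd z \<in> path_interior Q"
    and "\<And>z. z \<in> set (zipp P Q) \<Longrightarrow> \<exists>u v. u < length P \<and> v < length Q \<and> z = (P ! u, Q ! v) \<and> even (u + v)"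
proof -
  define Lp where "Lp = length P - 1"
  define Lq where "Lq = length Q - 1"
  define N where "N = max Lp Lq"
  have lP: "length P = Suc Lp" and lQ: "length Q = Suc Lq"
    using P Q unfolding is_path_def Lp_def Lq_def by auto
  have oLp: "odd Lp" and oLq: "odd Lq" using oP oQ Lp_def Lq_def by auto
  then have Lp1: "1 \<le> Lp" and Lq1: "1 \<le> Lq" by (simp_all add: odd_pos Suc_leI)
  have oN: "odd N" unfolding N_def using oLp oLq by (simp add: max_def)
  have lZ: "length (zipp P Q) = Suc N" unfolding zipp_length N_def Lp_def Lq_def ..
  have Zn: "zipp P Q ! k = (P ! padi Lp k, Q ! padi Lq k)" if "k < Suc N" for k
    using zipp_nth[of k P Q] that unfolding N_def Lp_def Lq_def by simp
  have dP: "distinct P" and dQ: "distinct Q" using P Q unfolding is_path_def by auto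
  have sP: "set P \<subseteq> verts G" and sQ: "set Q \<subseteq> verts H" using P Q unfolding is_path_def by auto
  have aP: "adj G (P ! m) (P ! Suc m)" if "Suc m < length P" for m
    using P that unfolding is_path_def by auto
  have aQ: "adj H (Q ! m) (Q ! Suc m)" if "Suc m < length Q" for m
    using Q that unfolding is_path_def by auto
  have stepP: "\<exists>m. Suc m < length P \<and> {P ! padi Lp k, P ! padi Lp (Suc k)} = {P ! m, P ! Suc m}" for k
  proof -
    from padi_step[OF Lp1, of k] show ?thesis
    proof
      assume a: "padi Lp (Suc k) = Suc (padi Lp k) \<and> Suc (padi Lp k) \<le> Lp"
      show ?thesis by (rule exI[of _ "padi Lp k"]) (use a lP in simp)
    next
      assume a: "padi Lp k = Suc (padi Lp (Suc k)) \<and> padi Lp k \<le> Lp"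
      show ?thesis by (rule exI[of _ "padi Lp (Suc k)"]) (use a lP in \<open>simp add: insert_commute\<close>)
    qed
  qed
  have stepQ: "\<exists>m. Suc m < length Q \<and> {Q ! padi Lq k, Q ! padi Lq (Suc k)} = {Q ! m, Q ! Suc m}" for k
  proof -
    from padi_step[OF Lq1, of k] show ?thesis
    proof
      assume a: "padi Lq (Suc k) = Suc (padi Lq k) \<and> Suc (padi Lq k) \<le> Lq"
      show ?thesis by (rule exI[of _ "padi Lq k"]) (use a lQ in simp)
    next
      assume a: "padi Lq k = Suc (padi Lq (Suc k)) \<and> padi Lq k \<le> Lq"
      show ?thesis by (rule exI[of _ "padi Lq (Suc k)"]) (use a lQ in \<open>simp add: insert_commute\<close>)
    qed
  qed
  have adjP: "adj G (P ! padi Lp k) (P ! padi Lp (Suc k))" for k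
  proof -
    from padi_step[OF Lp1, of k] show ?thesis
    proof
      assume "padi Lp (Suc k) = Suc (padi Lp k) \<and> Suc (padi Lp k) \<le> Lp"
      then show ?thesis using aP[of "padi Lp k"] lP by simp
    next
      assume a: "padi Lp k = Suc (padi Lp (Suc k)) \<and> padi Lp k \<le> Lp"
      then have "adj G (P ! padi Lp (Suc k)) (P ! padi Lp k)" using aP[of "padi Lp (Suc k)"] lP by simp
      then show ?thesis using sgD(3)[OF G] by blast
    qed
  qed
  have adjQ: "adj H (Q ! padi Lq k) (Q ! padi Lq (Suc k))" for k
  proof -
    from padi_step[OF Lq1, of k] show ?thesis
    proof
      assume "padi Lq (Suc k) = Suc (padi Lq k) \<and> Suc (padi Lq k) \<le> Lq"
      then show ?thesis using aQ[of "padi Lq k"] lQ by simp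
    next
      assume a: "padi Lq k = Suc (padi Lq (Suc k)) \<and> padi Lq k \<le> Lq"
      then have "adj H (Q ! padi Lq (Suc k)) (Q ! padi Lq k)" using aQ[of "padi Lq (Suc k)"] lQ by simp
      then show ?thesis using sgD(3)[OF H] by blast
    qed
  qed
  show "is_path X (zipp P Q)"
    unfolding is_path_def
  proof (intro conjI allI impI)
    show "2 \<le> length (zipp P Q)" using lZ oN by (cases N) auto
    show "distinct (zipp P Q)"
      unfolding distinct_conv_nth lZ
    proof (intro allI impI)
      fix i j assume ij: "i < Suc N" "j < Suc N" "i \<noteq> j"
      show "zipp P Q ! i \<noteq> zipp P Q ! j"
      proof (cases "Lq \<le> Lp")
        case True
        then have "N = Lp" unfolding N_def by simp
        then have "padi Lp i = i" "padi Lp j = j" using ij by (simp_all add: padi_id)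
        then have "P ! padi Lp i \<noteq> P ! padi Lp j" using dP ij lP \<open>N = Lp\<close> by (simp add: nth_eq_iff_index_eq)
        then show ?thesis using Zn ij by simp
      next
        case False
        then have "N = Lq" unfolding N_def by simp
        then have "padi Lq i = i" "padi Lq j = j" using ij by (simp_all add: padi_id)
        then have "Q ! padi Lq i \<noteq> Q ! padi Lq j" using dQ ij lQ \<open>N = Lq\<close> by (simp add: nth_eq_iff_index_eq)
        then show ?thesis using Zn ij by simp
      qed
    qed
    show "set (zipp P Q) \<subseteq> verts X"
    proof
      fix z assume "z \<in> set (zipp P Q)"
      then obtain k where k: "k < Suc N" "z = zipp P Q ! k" using lZ by (metis in_set_conv_nth)
      have "P ! padi Lp k \<in> verts G" using sP padi_le[of Lp k] lP by (simp add: subset_iff)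
      moreover have "Q ! padi Lq k \<in> verts H" using sQ padi_le[of Lq k] lQ by (simp add: subset_iff)
      ultimately show "z \<in> verts X" using V k Zn by auto
    qed
    fix k assume "Suc k < length (zipp P Q)"
    then have "k < Suc N" "Suc k < Suc N" using lZ by simp_all
    then show "adj X (zipp P Q ! k) (zipp P Q ! Suc k)"
      using Zn A adjP adjQ by simp
  qed
  have Z0: "zipp P Q ! 0 = (P ! 0, Q ! 0)" using Zn[of 0] by (simp add: padi_id)
  have ZN: "zipp P Q ! N = (P ! Lp, Q ! Lq)" using Zn[of N] padi_end[OF oLp oN] padi_end[OF oLq oN]
    unfolding N_def by simp
  have ne: "zipp P Q \<noteq> []" "P \<noteq> []" "Q \<noteq> []" using lZ lP lQ by auto
  show "hd (zipp P Q) = (hd P, hd Q)"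
    unfolding hd_conv_nth[OF ne(1)] hd_conv_nth[OF ne(2)] hd_conv_nth[OF ne(3)] by (rule Z0)
  show "last (zipp P Q) = (last P, last Q)"
    unfolding last_conv_nth[OF ne(1)] last_conv_nth[OF ne(2)] last_conv_nth[OF ne(3)] lZ lP lQ
    using ZN by simp
  show "odd (length (zipp P Q) - 1)" using lZ oN by simp
  show "fst ` e \<in> path_edges P \<and> snd ` e \<in> path_edges Q" if "e \<in> path_edges (zipp P Q)" for e
  proof -
    from that obtain k where k: "Suc k < length (zipp P Q)" "e = {zipp P Q ! k, zipp P Q ! Suc k}"
      by (rule path_edgeE)
    then have kk: "k < Suc N" "Suc k < Suc N" using lZ by simp_all
    have e: "e = {(P ! padi Lp k, Q ! padi Lq k), (P ! padi Lp (Suc k), Q ! padi Lq (Suc k))}"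
      using k(2) Zn[OF kk(1)] Zn[OF kk(2)] by simp
    have "fst ` e = {P ! padi Lp k, P ! padi Lp (Suc k)}" "snd ` e = {Q ! padi Lq k, Q ! padi Lq (Suc k)}"
      using e by auto
    then show ?thesis using stepP[of k] stepQ[of k] path_edgeI by metis
  qed
  show "fst z \<in> path_interior P \<or> snd z \<in> path_interior Q" if "z \<in> path_interior (zipp P Q)" for z
  proof -
    from that obtain k where k: "0 < k" "Suc k < length (zipp P Q)" "z = zipp P Q ! k"
      unfolding path_interior_conv by blast
    then have kN: "k < N" "k < Suc N" using lZ by simp_all
    show ?thesis
    proof (cases "Lq \<le> Lp")
      case True
      then have "N = Lp" unfolding N_def by simp
      then have "fst z = P ! k" using k Zn[OF kN(2)] kN by (simp add: padi_id)
      then have "fst z \<in> path_interior P" unfolding path_interior_conv using k(1) kN \<open>N = Lp\<close> lP by auto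
      then show ?thesis ..
    next
      case False
      then have "N = Lq" unfolding N_def by simp
      then have "snd z = Q ! k" using k Zn[OF kN(2)] kN by (simp add: padi_id)
      then have "snd z \<in> path_interior Q" unfolding path_interior_conv using k(1) kN \<open>N = Lq\<close> lQ by auto
      then show ?thesis ..
    qed
  qed
  show "\<exists>u v. u < length P \<and> v < length Q \<and> z = (P ! u, Q ! v) \<and> even (u + v)"
    if "z \<in> set (zipp P Q)" for z
  proof -
    from that obtain k where k: "k < Suc N" "z = zipp P Q ! k" using lZ by (metis in_set_conv_nth)
    have "even (padi Lp k + padi Lq k)"
      using padi_par[OF Lp1, of k] padi_par[OF Lq1, of k] by presburger
    moreover have "padi Lp k < length P" "padi Lq k < length Q"
      using padi_le[of Lp k] padi_le[of Lq k] lP lQ by simp_all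
    ultimately show ?thesis using k Zn by blast
  qed
qed



lemma is_path_rev:
  assumes G: "simple_graph G" and P: "is_path G P" shows "is_path G (rev P)"
  unfolding is_path_def
proof (intro conjI allI impI)
  show "2 \<le> length (rev P)" "distinct (rev P)" "set (rev P) \<subseteq> verts G"
    using P unfolding is_path_def by auto
  fix k assume k: "Suc k < length (rev P)"
  define m where "m = length P - Suc (Suc k)"
  have m: "Suc m < length P" "rev P ! k = P ! Suc m" "rev P ! Suc k = P ! m"
    using k unfolding m_def by (auto simp: rev_nth Suc_diff_Suc)
  have "adj G (P ! m) (P ! Suc m)" using P m(1) unfolding is_path_def by blast
  then show "adj G (rev P ! k) (rev P ! Suc k)" using m(2,3) sgD(3)[OF G] by simp
qed

lemma path_edges_rev_sub: "path_edges (rev P) \<subseteq> path_edges P"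
proof
  fix e assume "e \<in> path_edges (rev P)"
  then obtain k where k: "Suc k < length (rev P)" "e = {rev P ! k, rev P ! Suc k}" by (rule path_edgeE)
  define m where "m = length P - Suc (Suc k)"
  have m: "Suc m < length P" "rev P ! k = P ! Suc m" "rev P ! Suc k = P ! m"
    using k unfolding m_def by (auto simp: rev_nth Suc_diff_Suc)
  have "e = {P ! m, P ! Suc m}" using k(2) m by (simp add: insert_commute)
  then show "e \<in> path_edges P" using path_edgeI[OF m(1)] by simp
qed

lemma path_edges_rev: "path_edges (rev P) = path_edges P"
  using path_edges_rev_sub[of P] path_edges_rev_sub[of "rev P"] by simp

lemma path_interior_rev_sub: "path_interior (rev P) \<subseteq> path_interior P"
proof
  fix z assume "z \<in> path_interior (rev P)"
  then obtain k where k: "0 < k" "Suc k < length (rev P)" "z = rev P ! k"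
    unfolding path_interior_conv by blast
  define m where "m = length P - Suc k"
  have "0 < m" "Suc m < length P" "z = P ! m" using k unfolding m_def by (auto simp: rev_nth)
  then show "z \<in> path_interior P" unfolding path_interior_conv by blast
qed

lemma path_interior_rev: "path_interior (rev P) = path_interior P"
  using path_interior_rev_sub[of P] path_interior_rev_sub[of "rev P"] by simp

lemma edge_doubleton:
  assumes "e \<in> path_edges P" "distinct P" shows "\<exists>u v. u \<noteq> v \<and> e = {u, v}"
proof -
  from assms(1) obtain k where k: "Suc k < length P" "e = {P ! k, P ! Suc k}" by (rule path_edgeE)
  have "P ! k \<noteq> P ! Suc k" using assms(2) k(1) by (simp add: nth_eq_iff_index_eq)
  with k(2) show ?thesis by blast
qed

lemma edge_not_single:
  assumes "e \<in> path_edges P" "distinct P" shows "e \<noteq> {c}"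
proof
  assume "e = {c}"
  moreover obtain u v where "u \<noteq> v" "e = {u, v}" using edge_doubleton[OF assms] by blast
  ultimately show False by (metis insertI1 insert_commute singletonD)
qed

lemma edge_nonempty: "e \<in> path_edges P \<Longrightarrow> e \<noteq> {}"
  by (erule path_edgeE) simp

lemma gprod_verts: "verts (gprod p G H) = verts G \<times> verts H"
  by (cases p) (simp_all add: verts_def)

lemma strong_adj: "adj (gprod Strong G H) x y \<longleftrightarrow> cart_adj G H x y \<or> direct_adj G H x y"
  by (simp add: adj_def)

lemma direct_adj': "adj (gprod Direct G H) x y \<longleftrightarrow> direct_adj G H x y"
  by (simp add: adj_def)

lemma cart_adj': "adj (gprod Cartesian G H) x y \<longleftrightarrow> cart_adj G H x y"
  by (simp add: adj_def)

lemma lex_adj': "adj (gprod Lexicographic G H) x y \<longleftrightarrow> lex_adj G H x y"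
  by (simp add: adj_def)



locale two_imm =
  fixes G :: "'a graph" and H :: "'b graph" and a b :: nat
    and phi :: "nat \<Rightarrow> 'a" and P :: "nat \<Rightarrow> nat \<Rightarrow> 'a list"
    and psi :: "nat \<Rightarrow> 'b" and Q :: "nat \<Rightarrow> nat \<Rightarrow> 'b list"
  assumes G: "simple_graph G" and H: "simple_graph H"
    and phi_inj: "inj_on phi {0..<a}" and phi_V: "phi ` {0..<a} \<subseteq> verts G"
    and P_path: "\<And>i j. i < j \<Longrightarrow> j < a \<Longrightarrow> is_path G (P i j)"
    and P_hd: "\<And>i j. i < j \<Longrightarrow> j < a \<Longrightarrow> hd (P i j) = phi i"
    and P_last: "\<And>i j. i < j \<Longrightarrow> j < a \<Longrightarrow> last (P i j) = phi j"
    and P_odd: "\<And>i j. i < j \<Longrightarrow> j < a \<Longrightarrow> odd (length (P i j) - 1)"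
    and P_int: "\<And>i j k. i < j \<Longrightarrow> j < a \<Longrightarrow> k < a \<Longrightarrow> phi k \<notin> path_interior (P i j)"
    and P_disj: "\<And>i j k l. i < j \<Longrightarrow> j < a \<Longrightarrow> k < l \<Longrightarrow> l < a \<Longrightarrow> (i, j) \<noteq> (k, l) \<Longrightarrow>
          path_edges (P i j) \<inter> path_edges (P k l) = {}"
    and psi_inj: "inj_on psi {0..<b}" and psi_V: "psi ` {0..<b} \<subseteq> verts H"
    and Q_path: "\<And>i j. i < j \<Longrightarrow> j < b \<Longrightarrow> is_path H (Q i j)"
    and Q_hd: "\<And>i j. i < j \<Longrightarrow> j < b \<Longrightarrow> hd (Q i j) = psi i"
    and Q_last: "\<And>i j. i < j \<Longrightarrow> j < b \<Longrightarrow> last (Q i j) = psi j"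
    and Q_odd: "\<And>i j. i < j \<Longrightarrow> j < b \<Longrightarrow> odd (length (Q i j) - 1)"
    and Q_int: "\<And>i j k. i < j \<Longrightarrow> j < b \<Longrightarrow> k < b \<Longrightarrow> psi k \<notin> path_interior (Q i j)"
    and Q_disj: "\<And>i j k l. i < j \<Longrightarrow> j < b \<Longrightarrow> k < l \<Longrightarrow> l < b \<Longrightarrow> (i, j) \<noteq> (k, l) \<Longrightarrow>
          path_edges (Q i j) \<inter> path_edges (Q k l) = {}"
begin

definition R :: "nat \<Rightarrow> nat \<Rightarrow> 'b list" where
  "R x y = (if x < y then Q x y else rev (Q y x))"

lemma R_swap: "x \<noteq> y \<Longrightarrow> R y x = rev (R x y)"
  unfolding R_def by auto

lemma R_props:
  assumes "x \<noteq> y" "x < b" "y < b"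
  shows "is_path H (R x y)" "hd (R x y) = psi x" "last (R x y) = psi y" "odd (length (R x y) - 1)"
    "path_interior (R x y) = path_interior (Q (min x y) (max x y))"
    "path_edges (R x y) = path_edges (Q (min x y) (max x y))"
proof -
  have "is_path H (R x y) \<and> hd (R x y) = psi x \<and> last (R x y) = psi y \<and> odd (length (R x y) - 1)
    \<and> path_interior (R x y) = path_interior (Q (min x y) (max x y))
    \<and> path_edges (R x y) = path_edges (Q (min x y) (max x y))"
  proof (cases "x < y")
    case True
    then show ?thesis using Q_path[OF True assms(3)] Q_hd[OF True assms(3)] Q_last[OF True assms(3)]
        Q_odd[OF True assms(3)] unfolding R_def by simp
  next
    case False
    then have yx: "y < x" using assms(1) by simp
    have ne: "Q y x \<noteq> []" using Q_path[OF yx assms(2)] unfolding is_path_def by auto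
    show ?thesis using False yx is_path_rev[OF H Q_path[OF yx assms(2)]] Q_hd[OF yx assms(2)]
        Q_last[OF yx assms(2)] Q_odd[OF yx assms(2)] ne
      unfolding R_def by (simp add: hd_rev last_rev path_interior_rev path_edges_rev)
  qed
  then show "is_path H (R x y)" "hd (R x y) = psi x" "last (R x y) = psi y" "odd (length (R x y) - 1)"
    "path_interior (R x y) = path_interior (Q (min x y) (max x y))"
    "path_edges (R x y) = path_edges (Q (min x y) (max x y))" by simp_all
qed

definition PP :: "nat \<Rightarrow> nat \<Rightarrow> nat \<Rightarrow> nat \<Rightarrow> ('a \<times> 'b) list" where
  "PP i x j y = (if i = j then map (\<lambda>q. (phi i, q)) (Q x y)
     else if x = y then map (\<lambda>p. (p, psi x)) (P i j)
     else zipp (P i j) (R x y))"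

abbreviation S where "S \<equiv> gprod Strong G H"

lemma phiV: "k < a \<Longrightarrow> phi k \<in> verts G" using phi_V by auto
lemma psiV: "k < b \<Longrightarrow> psi k \<in> verts H" using psi_V by auto

lemma PP_basic:
  assumes v: "i \<le> j" "j < a" "x < b" "y < b" "i = j \<Longrightarrow> x < y"
  shows "is_path S (PP i x j y)" "hd (PP i x j y) = (phi i, psi x)" "last (PP i x j y) = (phi j, psi y)"
    "odd (length (PP i x j y) - 1)"
    "\<And>k z. k < a \<Longrightarrow> z < b \<Longrightarrow> (phi k, psi z) \<notin> path_interior (PP i x j y)"
proof -
  have VS: "verts S = verts G \<times> verts H" by (rule gprod_verts)
  have "is_path S (PP i x j y) \<and> hd (PP i x j y) = (phi i, psi x) \<and> last (PP i x j y) = (phi j, psi y)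
    \<and> odd (length (PP i x j y) - 1)
    \<and> (\<forall>k z. k < a \<longrightarrow> z < b \<longrightarrow> (phi k, psi z) \<notin> path_interior (PP i x j y))"
  proof (cases "i = j")
    case True
    then have xy: "x < y" using v by simp
    have Qp: "is_path H (Q x y)" by (rule Q_path[OF xy v(4)])
    have ne: "Q x y \<noteq> []" using Qp unfolding is_path_def by auto
    have pth: "is_path S (map (\<lambda>q. (phi i, q)) (Q x y))"
    proof (rule is_path_map[OF Qp])
      show "inj_on (\<lambda>q. (phi i, q)) (set (Q x y))" by (simp add: inj_on_def)
      show "(\<lambda>q. (phi i, q)) ` set (Q x y) \<subseteq> verts S"
        using Qp phiV[of i] v unfolding VS is_path_def by auto
      show "adj S (phi i, u) (phi i, w)" if "adj H u w" for u w
        using that phiV[of i] v unfolding strong_adj cart_adj_def by simp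
    qed
    have "(phi k, psi z) \<notin> path_interior (map (\<lambda>q. (phi i, q)) (Q x y))" if "k < a" "z < b" for k z
      using Q_int[OF xy v(4) that(2)] unfolding path_interior_map by auto
    then show ?thesis using True pth ne Q_hd[OF xy v(4)] Q_last[OF xy v(4)] Q_odd[OF xy v(4)]
      unfolding PP_def by (simp add: hd_map last_map)
  next
    case ij: False
    then have ij': "i < j" using v by simp
    have Pp: "is_path G (P i j)" by (rule P_path[OF ij' v(2)])
    have ne: "P i j \<noteq> []" using Pp unfolding is_path_def by auto
    show ?thesis
    proof (cases "x = y")
      case True
      have pth: "is_path S (map (\<lambda>p. (p, psi x)) (P i j))"
      proof (rule is_path_map[OF Pp])
        show "inj_on (\<lambda>p. (p, psi x)) (set (P i j))" by (simp add: inj_on_def)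
        show "(\<lambda>p. (p, psi x)) ` set (P i j) \<subseteq> verts S"
          using Pp psiV[of x] v unfolding VS is_path_def by auto
        show "adj S (u, psi x) (w, psi x)" if "adj G u w" for u w
          using that psiV[of x] v unfolding strong_adj cart_adj_def by simp
      qed
      have "(phi k, psi z) \<notin> path_interior (map (\<lambda>p. (p, psi x)) (P i j))" if "k < a" "z < b" for k z
        using P_int[OF ij' v(2) that(1)] unfolding path_interior_map by auto
      then show ?thesis using True ij pth ne P_hd[OF ij' v(2)] P_last[OF ij' v(2)] P_odd[OF ij' v(2)]
        unfolding PP_def by (simp add: hd_map last_map)
    next
      case xy: False
      note Rp = R_props[OF xy v(3) v(4)]
      note Z = zipp_props[OF G H Pp Rp(1) P_odd[OF ij' v(2)] Rp(4), of S]
      have V1: "verts G \<times> verts H \<subseteq> verts S" unfolding VS by simp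
      have A1: "adj S (p, q) (p', q')" if "adj G p p'" "adj H q q'" for p p' q q'
        using that unfolding strong_adj direct_adj_def by simp
      have mm: "min x y < max x y" "max x y < b" using xy v by auto
      have "(phi k, psi z) \<notin> path_interior (zipp (P i j) (R x y))" if "k < a" "z < b" for k z
      proof
        assume "(phi k, psi z) \<in> path_interior (zipp (P i j) (R x y))"
        then have "phi k \<in> path_interior (P i j) \<or> psi z \<in> path_interior (R x y)"
          using Z(6)[OF V1 A1] by fastforce
        then show False using P_int[OF ij' v(2) that(1)] Q_int[OF mm that(2)] Rp(5) by simp
      qed
      then show ?thesis using ij xy Z(1-4)[OF V1 A1] P_hd[OF ij' v(2)] P_last[OF ij' v(2)] Rp(2,3)
        unfolding PP_def by simp
    qed
  qed
  then show "is_path S (PP i x j y)" "hd (PP i x j y) = (phi i, psi x)" "last (PP i x j y) = (phi j, psi y)"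
    "odd (length (PP i x j y) - 1)"
    "\<And>k z. k < a \<Longrightarrow> z < b \<Longrightarrow> (phi k, psi z) \<notin> path_interior (PP i x j y)" by simp_all
qed

lemma PP_sig:
  assumes v: "i \<le> j" "j < a" "x < b" "y < b" "i = j \<Longrightarrow> x < y"
    and e: "e \<in> path_edges (PP i x j y)"
  shows "(i = j \<and> fst ` e = {phi i} \<and> snd ` e \<in> path_edges (Q x y))
    \<or> (i \<noteq> j \<and> x = y \<and> fst ` e \<in> path_edges (P i j) \<and> snd ` e = {psi x})
    \<or> (i \<noteq> j \<and> x \<noteq> y \<and> fst ` e \<in> path_edges (P i j)
        \<and> snd ` e \<in> path_edges (Q (min x y) (max x y)) \<and> e \<subseteq> set (zipp (P i j) (R x y)))"
proof (cases "i = j")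
  case True
  then have xy: "x < y" using v by simp
  have e': "e \<in> path_edges (map (\<lambda>q. (phi i, q)) (Q x y))" using e True unfolding PP_def by simp
  then obtain e0 where e0: "e0 \<in> path_edges (Q x y)" "e = (\<lambda>q. (phi i, q)) ` e0"
    unfolding path_edges_map by blast
  have "e0 \<noteq> {}" by (rule edge_nonempty[OF e0(1)])
  then have "fst ` e = {phi i}" "snd ` e = e0" using e0(2) by (auto simp: image_image)
  then show ?thesis using True e0(1) by simp
next
  case ij: False
  then have ij': "i < j" using v by simp
  show ?thesis
  proof (cases "x = y")
    case True
    have e': "e \<in> path_edges (map (\<lambda>p. (p, psi x)) (P i j))" using e True ij unfolding PP_def by simp
    then obtain e0 where e0: "e0 \<in> path_edges (P i j)" "e = (\<lambda>p. (p, psi x)) ` e0"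
      unfolding path_edges_map by blast
    have "e0 \<noteq> {}" by (rule edge_nonempty[OF e0(1)])
    then have "snd ` e = {psi x}" "fst ` e = e0" using e0(2) by (auto simp: image_image)
    then show ?thesis using True ij e0(1) by simp
  next
    case xy: False
    note Rp = R_props[OF xy v(3) v(4)]
    have Pp: "is_path G (P i j)" by (rule P_path[OF ij' v(2)])
    note Z = zipp_props[OF G H Pp Rp(1) P_odd[OF ij' v(2)] Rp(4), of S]
    have V1: "verts G \<times> verts H \<subseteq> verts S" unfolding gprod_verts by simp
    have A1: "adj S (p, q) (p', q')" if "adj G p p'" "adj H q q'" for p p' q q'
      using that unfolding strong_adj direct_adj_def by simp
    have e': "e \<in> path_edges (zipp (P i j) (R x y))" using e ij xy unfolding PP_def by simp
    have "e \<subseteq> set (zipp (P i j) (R x y))" by (rule path_edges_subset[OF e'])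
    then show ?thesis using Z(5)[OF V1 A1 e'] Rp(6) ij xy by simp
  qed
qed

lemma cross:
  assumes ij: "i < j" "j < a" and xy: "x \<noteq> y" "x < b" "y < b"
  shows "set (zipp (P i j) (R x y)) \<inter> set (zipp (P i j) (R y x)) = {}"
proof (rule ccontr)
  assume "set (zipp (P i j) (R x y)) \<inter> set (zipp (P i j) (R y x)) \<noteq> {}"
  then obtain z where z1: "z \<in> set (zipp (P i j) (R x y))" and z2: "z \<in> set (zipp (P i j) (R y x))" by blast
  have V1: "verts G \<times> verts H \<subseteq> verts S" unfolding gprod_verts by simp
  have A1: "adj S (p, q) (p', q')" if "adj G p p'" "adj H q q'" for p p' q q'
    using that unfolding strong_adj direct_adj_def by simp
  have Pp: "is_path G (P i j)" by (rule P_path[OF ij])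
  note R1 = R_props[OF xy]
  have xy': "y \<noteq> x" using xy by simp
  note R2 = R_props[OF xy' xy(3) xy(2)]
  note Z1 = zipp_props[OF G H Pp R1(1) P_odd[OF ij] R1(4), of S]
  note Z2 = zipp_props[OF G H Pp R2(1) P_odd[OF ij] R2(4), of S]
  define r where "r = R x y"
  have ryx: "R y x = rev r" unfolding r_def using R_swap[OF xy(1)] .
  from Z1(7)[OF V1 A1 z1] obtain u v where uv: "u < length (P i j)" "v < length r" "z = (P i j ! u, r ! v)" "even (u + v)"
    unfolding r_def by blast
  from Z2(7)[OF V1 A1 z2] obtain u' v' where uv': "u' < length (P i j)" "v' < length r"
    "z = (P i j ! u', rev r ! v')" "even (u' + v')"
    unfolding ryx by auto
  have dP: "distinct (P i j)" using Pp unfolding is_path_def by simp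
  have dr: "distinct r" using R1(1) unfolding is_path_def r_def by simp
  have or: "odd (length r - 1)" using R1(4) unfolding r_def .
  have "P i j ! u = P i j ! u'" using uv(3) uv'(3) by simp
  then have "u = u'" using dP uv(1) uv'(1) by (simp add: nth_eq_iff_index_eq)
  have "rev r ! v' = r ! (length r - Suc v')" using uv'(2) by (simp add: rev_nth)
  then have "r ! v = r ! (length r - Suc v')" using uv(3) uv'(3) by simp
  then have "v = length r - Suc v'" using dr uv(2) uv'(2) by (simp add: nth_eq_iff_index_eq)
  with \<open>u = u'\<close> uv(4) uv'(4) or uv'(2) show False by presburger
qed

lemma PP_disj:
  assumes v1: "i \<le> j" "j < a" "x < b" "y < b" "i = j \<Longrightarrow> x < y"
    and v2: "k \<le> l" "l < a" "z < b" "w < b" "k = l \<Longrightarrow> z < w"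
    and ne: "(i, x, j, y) \<noteq> (k, z, l, w)"
  shows "path_edges (PP i x j y) \<inter> path_edges (PP k z l w) = {}"
proof (rule ccontr)
  assume "path_edges (PP i x j y) \<inter> path_edges (PP k z l w) \<noteq> {}"
  then obtain e where e1: "e \<in> path_edges (PP i x j y)" and e2: "e \<in> path_edges (PP k z l w)" by blast
  have nsP: "E \<noteq> {c}" if "i' < j'" "j' < a" "E \<in> path_edges (P i' j')" for i' j' E c
    using edge_not_single[OF that(3)] P_path[OF that(1,2)] unfolding is_path_def by blast
  have nsQ: "E \<noteq> {c}" if "i' < j'" "j' < b" "E \<in> path_edges (Q i' j')" for i' j' E c
    using edge_not_single[OF that(3)] Q_path[OF that(1,2)] unfolding is_path_def by blast
  have mm: "min x y < max x y" "max x y < b" if "x \<noteq> y" "x < b" "y < b" for x y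
    using that by auto
  note s1 = PP_sig[OF v1 e1] and s2 = PP_sig[OF v2 e2]
  show False
  proof (cases "i = j")
    case T1: True
    then have e1': "fst ` e = {phi i}" "snd ` e \<in> path_edges (Q x y)" and xy: "x < y" using s1 v1 by auto
    show False
    proof (cases "k = l")
      case True
      then have e2': "fst ` e = {phi k}" "snd ` e \<in> path_edges (Q z w)" and zw: "z < w" using s2 v2 by auto
      have "phi i = phi k" using e1'(1) e2'(1) by simp
      then have "i = k" using phi_inj v1 v2 T1 True by (simp add: inj_on_def)
      have "(x, y) = (z, w)"
      proof (rule ccontr)
        assume "(x, y) \<noteq> (z, w)"
        then have "path_edges (Q x y) \<inter> path_edges (Q z w) = {}" using Q_disj xy zw v1 v2 by blast
        then show False using e1'(2) e2'(2) by blast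
      qed
      then show False using ne \<open>i = k\<close> T1 True by simp
    next
      case False
      then have "fst ` e \<in> path_edges (P k l)" using s2 by auto
      then have "fst ` e \<noteq> {phi i}" using False v2 by (intro nsP[of k l]) auto
      then show False using e1'(1) by simp
    qed
  next
    case F1: False
    then have ij: "i < j" using v1 by simp
    show False
    proof (cases "k = l")
      case True
      then have "fst ` e = {phi k}" using s2 by auto
      moreover have "fst ` e \<in> path_edges (P i j)" using s1 F1 by auto
      ultimately show False using nsP[of i j "fst ` e" "phi k"] ij v1 by simp
    next
      case F2: False
      then have kl: "k < l" using v2 by simp
      have p1: "fst ` e \<in> path_edges (P i j)" using s1 F1 by auto
      have p2: "fst ` e \<in> path_edges (P k l)" using s2 F2 by auto
      have "(i, j) = (k, l)"
      proof (rule ccontr)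
        assume "(i, j) \<noteq> (k, l)"
        then have "path_edges (P i j) \<inter> path_edges (P k l) = {}" using P_disj ij kl v1 v2 by blast
        then show False using p1 p2 by blast
      qed
      then have ik: "i = k" "j = l" by simp_all
      show False
      proof (cases "x = y")
        case T3: True
        then have q1: "snd ` e = {psi x}" using s1 F1 by auto
        show False
        proof (cases "z = w")
          case True
          then have "snd ` e = {psi z}" using s2 F2 by auto
          then have "psi x = psi z" using q1 by simp
          then have "x = z" using psi_inj v1 v2 by (simp add: inj_on_def)
          then show False using ne ik T3 True by simp
        next
          case False
          then have "snd ` e \<in> path_edges (Q (min z w) (max z w))" using s2 F2 by auto
          then show False using nsQ[OF mm[OF False v2(3,4)], of "snd ` e" "psi x"] q1 by simp
        qed
      next
        case F3: False
        then have q1: "snd ` e \<in> path_edges (Q (min x y) (max x y))"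
          and z1: "e \<subseteq> set (zipp (P i j) (R x y))" using s1 F1 by auto
        show False
        proof (cases "z = w")
          case True
          then have "snd ` e = {psi z}" using s2 F2 by auto
          then show False using nsQ[OF mm[OF F3 v1(3,4)], of "snd ` e" "psi z"] q1 by simp
        next
          case F4: False
          then have q2: "snd ` e \<in> path_edges (Q (min z w) (max z w))"
            and z2: "e \<subseteq> set (zipp (P k l) (R z w))" using s2 F2 by auto
          have "(min x y, max x y) = (min z w, max z w)"
          proof (rule ccontr)
            assume "(min x y, max x y) \<noteq> (min z w, max z w)"
            then have "path_edges (Q (min x y) (max x y)) \<inter> path_edges (Q (min z w) (max z w)) = {}"
              using Q_disj[OF mm[OF F3 v1(3,4)] mm[OF F4 v2(3,4)]] by blast
            then show False using q1 q2 by blast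
          qed
          then have "(x = z \<and> y = w) \<or> (x = w \<and> y = z)" by (auto simp: min_def max_def split: if_splits)
          then show False
          proof
            assume "x = z \<and> y = w"
            then show False using ne ik by simp
          next
            assume c: "x = w \<and> y = z"
            have "e \<noteq> {}" by (rule edge_nonempty[OF e1])
            moreover have "e \<subseteq> set (zipp (P i j) (R y x))" using z2 c ik by simp
            ultimately show False using cross[OF ij v1(2) F3 v1(3,4)] z1 by blast
          qed
        qed
      qed
    qed
  qed
qed

end



lemma two_imm_from:
  assumes "simple_graph G" "simple_graph H" "has_toi_Kt G a" "has_toi_Kt H b"
  obtains phi P psi Q where "two_imm G H a b phi P psi Q"
proof -
  from assms(3) obtain phi P where h1: "inj_on phi {0..<a}" "phi ` {0..<a} \<subseteq> verts G"
    "\<And>i j. i < j \<Longrightarrow> j < a \<Longrightarrow> is_path G (P i j)"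
    "\<And>i j. i < j \<Longrightarrow> j < a \<Longrightarrow> hd (P i j) = phi i"
    "\<And>i j. i < j \<Longrightarrow> j < a \<Longrightarrow> last (P i j) = phi j"
    "\<And>i j. i < j \<Longrightarrow> j < a \<Longrightarrow> odd (length (P i j) - 1)"
    "\<And>i j k. i < j \<Longrightarrow> j < a \<Longrightarrow> k < a \<Longrightarrow> phi k \<notin> path_interior (P i j)"
    "\<And>i j k l. i < j \<Longrightarrow> j < a \<Longrightarrow> k < l \<Longrightarrow> l < a \<Longrightarrow> (i, j) \<noteq> (k, l) \<Longrightarrow>
          path_edges (P i j) \<inter> path_edges (P k l) = {}"
    by (erule has_toiE)
  from assms(4) obtain psi Q where h2: "inj_on psi {0..<b}" "psi ` {0..<b} \<subseteq> verts H"
    "\<And>i j. i < j \<Longrightarrow> j < b \<Longrightarrow> is_path H (Q i j)"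
    "\<And>i j. i < j \<Longrightarrow> j < b \<Longrightarrow> hd (Q i j) = psi i"
    "\<And>i j. i < j \<Longrightarrow> j < b \<Longrightarrow> last (Q i j) = psi j"
    "\<And>i j. i < j \<Longrightarrow> j < b \<Longrightarrow> odd (length (Q i j) - 1)"
    "\<And>i j k. i < j \<Longrightarrow> j < b \<Longrightarrow> k < b \<Longrightarrow> psi k \<notin> path_interior (Q i j)"
    "\<And>i j k l. i < j \<Longrightarrow> j < b \<Longrightarrow> k < l \<Longrightarrow> l < b \<Longrightarrow> (i, j) \<noteq> (k, l) \<Longrightarrow>
          path_edges (Q i j) \<inter> path_edges (Q k l) = {}"
    by (erule has_toiE)
  have "two_imm G H a b phi P psi Q"
    by (rule two_imm.intro[OF assms(1,2) h1(1,2) h1(3-8) h2(1,2) h2(3-8)])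
  then show ?thesis by (rule that)
qed

context two_imm
begin

lemma direct_result:
  assumes "a = b"
  shows "has_toi_Kt (gprod Direct G H) a"
proof (rule has_toiI[of "\<lambda>i. (phi i, psi i)" a _ "\<lambda>i j. zipp (P i j) (Q i j)"])
  define D where "D = gprod Direct G H"
  have V1: "verts G \<times> verts H \<subseteq> verts D" unfolding D_def gprod_verts by simp
  have A1: "adj D (p, q) (p', q')" if "adj G p p'" "adj H q q'" for p p' q q'
    using that unfolding D_def direct_adj' direct_adj_def by simp
  show "inj_on (\<lambda>i. (phi i, psi i)) {0..<a}" using phi_inj by (simp add: inj_on_def)
  show "(\<lambda>i. (phi i, psi i)) ` {0..<a} \<subseteq> verts (gprod Direct G H)"
    using phiV psiV assms unfolding gprod_verts by auto
  fix i j assume ij: "i < j" "j < a"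
  have ijb: "i < j" "j < b" using ij assms by simp_all
  note Z = zipp_props[OF G H P_path[OF ij] Q_path[OF ijb] P_odd[OF ij] Q_odd[OF ijb], of D]
  note Z' = Z(1-6)[OF V1 A1]
  show "is_path (gprod Direct G H) (zipp (P i j) (Q i j))" using Z'(1) unfolding D_def .
  show "hd (zipp (P i j) (Q i j)) = (phi i, psi i)" using Z'(2) P_hd[OF ij] Q_hd[OF ijb] by simp
  show "last (zipp (P i j) (Q i j)) = (phi j, psi j)" using Z'(3) P_last[OF ij] Q_last[OF ijb] by simp
  show "odd (length (zipp (P i j) (Q i j)) - 1)" by (rule Z'(4))
  show "(phi k, psi k) \<notin> path_interior (zipp (P i j) (Q i j))" if "k < a" for k
  proof
    assume "(phi k, psi k) \<in> path_interior (zipp (P i j) (Q i j))"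
    then have "phi k \<in> path_interior (P i j) \<or> psi k \<in> path_interior (Q i j)" using Z'(6) by fastforce
    then show False using P_int[OF ij that] Q_int[OF ijb] that assms by simp
  qed
next
  define D where "D = gprod Direct G H"
  have V1: "verts G \<times> verts H \<subseteq> verts D" unfolding D_def gprod_verts by simp
  have A1: "adj D (p, q) (p', q')" if "adj G p p'" "adj H q q'" for p p' q q'
    using that unfolding D_def direct_adj' direct_adj_def by simp
  fix i j k l assume ijkl: "i < j" "j < a" "k < l" "l < a" "(i, j) \<noteq> (k, l)"
  have ijb: "i < j" "j < b" using ijkl assms by simp_all
  show "path_edges (zipp (P i j) (Q i j)) \<inter> path_edges (zipp (P k l) (Q k l)) = {}"
  proof (rule ccontr)
    assume "path_edges (zipp (P i j) (Q i j)) \<inter> path_edges (zipp (P k l) (Q k l)) \<noteq> {}"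
    then obtain e where e1: "e \<in> path_edges (zipp (P i j) (Q i j))" and e2: "e \<in> path_edges (zipp (P k l) (Q k l))"
      by blast
    have klb: "k < l" "l < b" using ijkl assms by simp_all
    note Z1 = zipp_props[OF G H P_path[OF ijkl(1,2)] Q_path[OF ijb] P_odd[OF ijkl(1,2)] Q_odd[OF ijb], of D]
    note Z2 = zipp_props[OF G H P_path[OF ijkl(3,4)] Q_path[OF klb] P_odd[OF ijkl(3,4)] Q_odd[OF klb], of D]
    have "fst ` e \<in> path_edges (P i j)" using Z1(5)[OF V1 A1 e1] by simp
    moreover have "fst ` e \<in> path_edges (P k l)" using Z2(5)[OF V1 A1 e2] by simp
    ultimately show False using P_disj[OF ijkl] by blast
  qed
qed

end



lemma divmod_facts:
  fixes n1 n2 b a :: nat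
  assumes "n1 < n2" "n2 < a * b"
  shows "n1 div b \<le> n2 div b" "n2 div b < a" "n1 mod b < b" "n2 mod b < b"
    "n1 div b = n2 div b \<Longrightarrow> n1 mod b < n2 mod b"
proof -
  have b0: "0 < b" using assms by (cases b) auto
  show "n1 div b \<le> n2 div b" using assms(1) by (simp add: div_le_mono)
  show "n2 div b < a" using assms(2) b0 by (simp add: less_mult_imp_div_less)
  show "n1 mod b < b" "n2 mod b < b" using b0 by simp_all
  show "n1 mod b < n2 mod b" if "n1 div b = n2 div b"
  proof -
    have "n1 = n1 div b * b + n1 mod b" by simp
    moreover have "n2 = n2 div b * b + n2 mod b" by simp
    then have "n2 = n1 div b * b + n2 mod b" using that by simp
    ultimately
    show ?thesis using assms(1) by linarith
  qed
qed

context two_imm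
begin

lemma strong_result: "has_toi_Kt S (a * b)"
proof (rule has_toiI[of "\<lambda>n. (phi (n div b), psi (n mod b))" "a * b" _
      "\<lambda>n1 n2. PP (n1 div b) (n1 mod b) (n2 div b) (n2 mod b)"])
  have b0: "n < a * b \<Longrightarrow> 0 < b" for n by (cases b) auto
  have da: "n div b < a" if "n < a * b" for n using that b0[OF that] by (simp add: less_mult_imp_div_less)
  have mb: "n mod b < b" if "n < a * b" for n using b0[OF that] by simp
  show "inj_on (\<lambda>n. (phi (n div b), psi (n mod b))) {0..<a * b}"
  proof (rule inj_onI)
    fix n m assume n: "n \<in> {0..<a * b}" and m: "m \<in> {0..<a * b}"
      and eq: "(phi (n div b), psi (n mod b)) = (phi (m div b), psi (m mod b))"
    have "n div b = m div b" using eq phi_inj da n m by (auto simp: inj_on_def)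
    moreover have "n mod b = m mod b" using eq psi_inj mb n m by (auto simp: inj_on_def)
    ultimately show "n = m" by (metis div_mult_mod_eq)
  qed
  show "(\<lambda>n. (phi (n div b), psi (n mod b))) ` {0..<a * b} \<subseteq> verts S"
    unfolding gprod_verts using phiV psiV da mb by auto
next
  fix n1 n2 assume n: "n1 < n2" "n2 < a * b"
  note v = divmod_facts[OF n]
  have v1: "n1 div b \<le> n2 div b" "n2 div b < a" "n1 mod b < b" "n2 mod b < b" using v by simp_all
  note B = PP_basic[OF v1 v(5)]
  show "is_path S (PP (n1 div b) (n1 mod b) (n2 div b) (n2 mod b))" by (rule B(1))
  show "hd (PP (n1 div b) (n1 mod b) (n2 div b) (n2 mod b)) = (phi (n1 div b), psi (n1 mod b))" by (rule B(2))
  show "last (PP (n1 div b) (n1 mod b) (n2 div b) (n2 mod b)) = (phi (n2 div b), psi (n2 mod b))" by (rule B(3))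
  show "odd (length (PP (n1 div b) (n1 mod b) (n2 div b) (n2 mod b)) - 1)" by (rule B(4))
  fix k assume k: "k < a * b"
  have b0: "0 < b" using k by (cases b) auto
  have "k div b < a" using k b0 by (simp add: less_mult_imp_div_less)
  moreover have "k mod b < b" using b0 by simp
  ultimately show "(phi (k div b), psi (k mod b)) \<notin> path_interior (PP (n1 div b) (n1 mod b) (n2 div b) (n2 mod b))"
    using B(5)[of "k div b" "k mod b"] by simp
next
  fix n1 n2 n3 n4 assume n: "n1 < n2" "n2 < a * b" "n3 < n4" "n4 < a * b" "(n1, n2) \<noteq> (n3, n4)"
  note v = divmod_facts[OF n(1,2)]
  note w = divmod_facts[OF n(3,4)]
  have v1: "n1 div b \<le> n2 div b" "n2 div b < a" "n1 mod b < b" "n2 mod b < b" using v by simp_all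
  have w1: "n3 div b \<le> n4 div b" "n4 div b < a" "n3 mod b < b" "n4 mod b < b" using w by simp_all
  have ne: "(n1 div b, n1 mod b, n2 div b, n2 mod b) \<noteq> (n3 div b, n3 mod b, n4 div b, n4 mod b)"
  proof
    assume "(n1 div b, n1 mod b, n2 div b, n2 mod b) = (n3 div b, n3 mod b, n4 div b, n4 mod b)"
    then have "n1 = n3" "n2 = n4" by (metis div_mult_mod_eq prod.inject)+
    then show False using n(5) by simp
  qed
  show "path_edges (PP (n1 div b) (n1 mod b) (n2 div b) (n2 mod b)) \<inter>
        path_edges (PP (n3 div b) (n3 mod b) (n4 div b) (n4 mod b)) = {}"
    by (rule PP_disj[OF v1 v(5) w1 w(5) ne])
qed

end

lemma strong_toi:
  assumes "simple_graph G" "simple_graph H" "has_toi_Kt G a" "has_toi_Kt H b"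
  shows "has_toi_Kt (gprod Strong G H) (a * b)"
proof -
  obtain phi P psi Q where "two_imm G H a b phi P psi Q" using two_imm_from[OF assms] .
  then show ?thesis by (rule two_imm.strong_result)
qed

lemma direct_toi:
  assumes "simple_graph G" "simple_graph H" "has_toi_Kt G t" "has_toi_Kt H t"
  shows "has_toi_Kt (gprod Direct G H) t"
proof -
  obtain phi P psi Q where "two_imm G H t t phi P psi Q" using two_imm_from[OF assms] .
  then show ?thesis by (rule two_imm.direct_result) simp
qed



lemma mod_add_inj:
  fixes a x y k :: nat
  assumes "x < k" "y < k" "(a + x) mod k = (a + y) mod k" shows "x = y"
proof -
  have key: "u = v" if "u < k" "v < k" "u \<le> v" "(a + v) mod k = (a + u) mod k" for u v
  proof -
    have "k dvd (a + v) - (a + u)" using mod_eq_dvd_iff_nat[of "a + u" "a + v" k] that by simp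
    then have "k dvd v - u" by simp
    moreover have "v - u < k" using that by simp
    ultimately have "v - u = 0" using nat_dvd_not_less by (cases "v - u") auto
    then show ?thesis using that(3) by simp
  qed
  show ?thesis
  proof (cases "x \<le> y")
    case True then show ?thesis using key[of x y] assms by simp
  next
    case False then show ?thesis using key[of y x] assms by simp
  qed
qed

lemma mul_add_inj:
  fixes a a' x x' K :: nat
  assumes "x < K" "x' < K" "a * K + x = a' * K + x'" shows "a = a' \<and> x = x'"
proof -
  have "(a * K + x) div K = a" "(a' * K + x') div K = a'" using assms(1,2) by simp_all
  moreover have "(a * K + x) mod K = x" "(a' * K + x') mod K = x'" using assms(1,2) by simp_all
  ultimately show ?thesis using assms(3) by metis
qed

theorem mainTheorem2:
  fixes G :: "'a graph" and H :: "'b graph" and p :: prodkind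
  assumes "simple_graph G" and "simple_graph H"
    and "card (verts G) \<ge> 2" and "card (verts H) \<ge> 2"
  shows "\<not> min_counterexample (gprod p G H)"
proof
  assume mc: "min_counterexample (gprod p G H)"
  define X where "X = gprod p G H"
  have sG: "simple_graph G" and sH: "simple_graph H" by fact+
  have mcc: "simple_graph X \<and> toi X < chi X" using mc unfolding X_def min_counterexample_def
    by (elim conjE) (intro conjI)
  have sX: "simple_graph X" and lt: "toi X < chi X" using mcc by simp_all
  have finX: "finite (verts X)" using sX by (rule sg_fin)
  have finG: "finite (verts G)" using sG by (rule sg_fin)
  have finH: "finite (verts H)" using sH by (rule sg_fin)
  have VX: "verts X = verts G \<times> verts H" unfolding X_def by (rule gprod_verts)
  have memX: "fst v \<in> verts G" "snd v \<in> verts H" if "v \<in> verts X" for v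
    using that unfolding VX by (simp_all add: mem_Times_iff)
  have cX: "card (verts X) = card (verts G) * card (verts H)" unfolding VX by (rule card_cartesian_product)
  have "card (verts G) * 1 < card (verts G) * card (verts H)" using assms(3,4) by (intro mult_less_mono2) auto
  then have "card (verts G) < card (verts X)" using cX by simp
  then have cG: "chi G \<le> toi G" using transfer[OF mc[folded X_def] sG] by blast
  have "card (verts H) * 1 < card (verts H) * card (verts G)" using assms(3,4) by (intro mult_less_mono2) auto
  then have "card (verts H) < card (verts X)" using cX by (simp add: mult.commute)
  then have cH: "chi H \<le> toi H" using transfer[OF mc[folded X_def] sH] by blast
  obtain cg where cg: "\<forall>v\<in>verts G. cg v < chi G" "\<forall>u v. adj G u v \<longrightarrow> cg u \<noteq> cg v"
    using chi_col[OF sG] by blast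
  obtain ch where ch: "\<forall>v\<in>verts H. ch v < chi H" "\<forall>u v. adj H u v \<longrightarrow> ch u \<noteq> ch v"
    using chi_col[OF sH] by blast
  have "verts G \<noteq> {}" using assms(3) by auto
  then obtain g0 where g0: "g0 \<in> verts G" by blast
  have "verts H \<noteq> {}" using assms(4) by auto
  then obtain h0 where h0: "h0 \<in> verts H" by blast
  have prodcol: "chi X \<le> chi G * chi H"
    if hyp: "\<And>x y. adj X x y \<Longrightarrow> (adj G (fst x) (fst y)) \<or> (fst x = fst y \<and> adj H (snd x) (snd y))"
  proof (rule chi_le[of X "\<lambda>x. cg (fst x) * chi H + ch (snd x)"])
    show "\<forall>v\<in>verts X. cg (fst v) * chi H + ch (snd v) < chi G * chi H"
    proof
      fix v assume "v \<in> verts X"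
      then have "fst v \<in> verts G" "snd v \<in> verts H" by (rule memX)+
      then have "cg (fst v) < chi G" "ch (snd v) < chi H" using cg ch by auto
      then have "cg (fst v) * chi H + ch (snd v) < cg (fst v) * chi H + chi H" by simp
      also have "\<dots> = (Suc (cg (fst v))) * chi H" by simp
      also have "\<dots> \<le> chi G * chi H" using \<open>cg (fst v) < chi G\<close> by (intro mult_le_mono1) simp
      finally show "cg (fst v) * chi H + ch (snd v) < chi G * chi H" .
    qed
    show "\<forall>u v. adj X u v \<longrightarrow> cg (fst u) * chi H + ch (snd u) \<noteq> cg (fst v) * chi H + ch (snd v)"
    proof (intro allI impI notI)
      fix u v assume a: "adj X u v" and eq: "cg (fst u) * chi H + ch (snd u) = cg (fst v) * chi H + ch (snd v)"
      have uX: "u \<in> verts X" and vX: "v \<in> verts X" using sgD[OF sX a] by simp_all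
      have "snd u \<in> verts H" "snd v \<in> verts H" using memX(2)[OF uX] memX(2)[OF vX] by simp_all
      then have "ch (snd u) < chi H" "ch (snd v) < chi H" using ch by auto
      then have "cg (fst u) = cg (fst v) \<and> ch (snd u) = ch (snd v)" using mul_add_inj eq by blast
      then show False using hyp[OF a] cg(2) ch(2) by blast
    qed
  qed
  have toiG: "has_toi_Kt G (toi G)" using toi_has[OF finG] .
  have toiH: "has_toi_Kt H (toi H)" using toi_has[OF finH] .
  show False
  proof (cases p)
    case Cartesian
    have aX: "adj X x y \<longleftrightarrow> cart_adj G H x y" for x y unfolding X_def Cartesian by (rule cart_adj')
    define k where "k = max (chi G) (chi H)"
    have "chi X \<le> k"
    proof (rule chi_le[of X "\<lambda>x. (cg (fst x) + ch (snd x)) mod k"])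
      have "cg g0 < chi G" using cg g0 by auto
      then have k0: "0 < k" unfolding k_def by simp
      show "\<forall>v\<in>verts X. (cg (fst v) + ch (snd v)) mod k < k" using k0 by simp
      show "\<forall>u v. adj X u v \<longrightarrow> (cg (fst u) + ch (snd u)) mod k \<noteq> (cg (fst v) + ch (snd v)) mod k"
      proof (intro allI impI notI)
        fix u v assume a: "adj X u v" and eq: "(cg (fst u) + ch (snd u)) mod k = (cg (fst v) + ch (snd v)) mod k"
        have uX: "u \<in> verts X" and vX: "v \<in> verts X" using sgD[OF sX a] by simp_all
        have uv: "fst u \<in> verts G" "snd u \<in> verts H" "fst v \<in> verts G" "snd v \<in> verts H"
          using memX[OF uX] memX[OF vX] by simp_all
        then have bnd: "cg (fst u) < k" "cg (fst v) < k" "ch (snd u) < k" "ch (snd v) < k"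
          using cg ch unfolding k_def by (auto simp: less_max_iff_disj)
        from a have "cart_adj G H u v" using aX by simp
        then show False unfolding cart_adj_def
        proof
          assume c: "fst u = fst v \<and> fst u \<in> verts G \<and> adj H (snd u) (snd v)"
          then have "ch (snd u) = ch (snd v)" using mod_add_inj[OF bnd(3,4)] eq by simp
          then show False using c ch(2) by blast
        next
          assume c: "snd u = snd v \<and> snd u \<in> verts H \<and> adj G (fst u) (fst v)"
          then have "(ch (snd u) + cg (fst u)) mod k = (ch (snd u) + cg (fst v)) mod k" using eq by (simp add: add.commute)
          then have "cg (fst u) = cg (fst v)" using mod_add_inj[OF bnd(1,2)] by blast
          then show False using c cg(2) by blast
        qed
      qed
    qed
    moreover have "toi G \<le> toi X"
    proof (rule toi_hom[OF sG finX, of "\<lambda>g. (g, h0)"])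
      show "inj_on (\<lambda>g. (g, h0)) (verts G)" by (simp add: inj_on_def)
      show "(\<lambda>g. (g, h0)) ` verts G \<subseteq> verts X" unfolding VX using h0 by blast
      show "adj X (u, h0) (v, h0)" if "adj G u v" for u v using that h0 aX unfolding cart_adj_def by simp
    qed
    moreover have "toi H \<le> toi X"
    proof (rule toi_hom[OF sH finX, of "\<lambda>h. (g0, h)"])
      show "inj_on (\<lambda>h. (g0, h)) (verts H)" by (simp add: inj_on_def)
      show "(\<lambda>h. (g0, h)) ` verts H \<subseteq> verts X" unfolding VX using g0 by blast
      show "adj X (g0, u) (g0, v)" if "adj H u v" for u v using that g0 aX unfolding cart_adj_def by simp
    qed
    ultimately show False using lt cG cH unfolding k_def by linarith
  next
    case Direct
    have aX: "adj X x y \<longleftrightarrow> direct_adj G H x y" for x y unfolding X_def Direct by (rule direct_adj')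
    have "chi X \<le> chi G"
    proof (rule chi_le[of X "\<lambda>x. cg (fst x)"])
      show "\<forall>v\<in>verts X. cg (fst v) < chi G" using memX cg by blast
      show "\<forall>u v. adj X u v \<longrightarrow> cg (fst u) \<noteq> cg (fst v)" using aX cg unfolding direct_adj_def by blast
    qed
    moreover have "chi X \<le> chi H"
    proof (rule chi_le[of X "\<lambda>x. ch (snd x)"])
      show "\<forall>v\<in>verts X. ch (snd v) < chi H" using memX ch by blast
      show "\<forall>u v. adj X u v \<longrightarrow> ch (snd u) \<noteq> ch (snd v)" using aX ch unfolding direct_adj_def by blast
    qed
    moreover have "min (toi G) (toi H) \<le> toi X"
    proof -
      have "has_toi_Kt G (min (toi G) (toi H))" using has_toi_mono[OF toiG] by simp
      moreover have "has_toi_Kt H (min (toi G) (toi H))" using has_toi_mono[OF toiH] by simp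
      ultimately have "has_toi_Kt (gprod Direct G H) (min (toi G) (toi H))" by (rule direct_toi[OF sG sH])
      then show ?thesis using toi_ge[OF finX] unfolding X_def Direct by blast
    qed
    ultimately show False using lt cG cH by linarith
  next
    case Strong
    have aX: "adj X x y \<longleftrightarrow> cart_adj G H x y \<or> direct_adj G H x y" for x y
      unfolding X_def Strong by (rule strong_adj)
    have "chi X \<le> chi G * chi H"
    proof (rule prodcol)
      fix x y assume "adj X x y"
      then show "adj G (fst x) (fst y) \<or> (fst x = fst y \<and> adj H (snd x) (snd y))"
        using aX unfolding cart_adj_def direct_adj_def by auto
    qed
    moreover have "toi G * toi H \<le> toi X"
      using strong_toi[OF sG sH toiG toiH] toi_ge[OF finX] unfolding X_def Strong by blast
    moreover have "chi G * chi H \<le> toi G * toi H" using cG cH by (rule mult_le_mono)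
    ultimately show False using lt by linarith
  next
    case Lexicographic
    have aX: "adj X x y \<longleftrightarrow> lex_adj G H x y" for x y
      unfolding X_def Lexicographic by (rule lex_adj')
    have "chi X \<le> chi G * chi H"
    proof (rule prodcol)
      fix x y assume "adj X x y"
      then show "adj G (fst x) (fst y) \<or> (fst x = fst y \<and> adj H (snd x) (snd y))"
        using aX unfolding lex_adj_def by auto
    qed
    moreover have "toi G * toi H \<le> toi X"
    proof -
      define S where "S = gprod Strong G H"
      have sS: "simple_graph S"
      proof -
        have "finite (verts S)" unfolding S_def gprod_verts using finG finH by simp
        moreover have "\<forall>u v. adj S u v \<longrightarrow> adj X u v"
        proof (intro allI impI)
          fix u v assume "adj S u v"
          then have "cart_adj G H u v \<or> direct_adj G H u v" unfolding S_def strong_adj .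
          then show "adj X u v" unfolding aX lex_adj_def cart_adj_def direct_adj_def
            using sgD[OF sH] by auto
        qed
        moreover have "\<forall>u v. adj S u v \<longrightarrow> adj S v u"
          unfolding S_def strong_adj cart_adj_def direct_adj_def using sgD[OF sG] sgD[OF sH] by auto
        moreover have "verts S = verts X" unfolding S_def VX gprod_verts ..
        ultimately show ?thesis using sX unfolding simple_graph_def by metis
      qed
      have "toi S \<le> toi X"
      proof (rule toi_hom[OF sS finX, of id])
        show "inj_on id (verts S)" by simp
        show "id ` verts S \<subseteq> verts X" unfolding S_def VX gprod_verts by simp
        fix u v assume "adj S u v"
        then have "cart_adj G H u v \<or> direct_adj G H u v" unfolding S_def strong_adj .
        then show "adj X (id u) (id v)" unfolding id_def aX lex_adj_def cart_adj_def direct_adj_def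
          using sgD[OF sH] by auto
      qed
      moreover have "toi G * toi H \<le> toi S"
      proof -
        have "has_toi_Kt S (toi G * toi H)" unfolding S_def by (rule strong_toi[OF sG sH toiG toiH])
        then show ?thesis by (rule toi_ge[OF sg_fin[OF sS]])
      qed
      ultimately show ?thesis by simp
    qed
    moreover have "chi G * chi H \<le> toi G * toi H" using cG cH by (rule mult_le_mono)
    ultimately show False using lt by linarith
  qed
qed


end
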